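(* There exist $\delta_0>0$, $\varepsilon_1>0$ and $C>0$ such that for all $\delta\in(0,\delta_0]$, $\varepsilon\in(0,\varepsilon_1]$, all initial conditions with $h^\delta_\varepsilon(0)\in\mathcal V$, and all $0\le\mathcal T'\le\mathcal T\le (T\wedge T^\delta_\varepsilon)/\varepsilon$, \[ \Bigl|\int_{\mathcal T'}^{\mathcal T}H^\delta(z^\delta_\varepsilon(s))\,ds\Bigr|\le C\,\bigl(1\vee(\mathcal T-\mathcal T')\bigr). \]
   Context: Let $\kappa:\mathbb R\to\mathbb R$ be $\mathcal C^2$ with $\kappa(x)=0$ for $x\ge1$ and $\kappa'(x)<0$ for $x<1$; $\kappa_\delta(x)=\kappa(x/\delta)$. Soft core system with $n_1=n_2=1$: Hamiltonian $\frac{MV^2}{2}+\frac{m_1v_1^2}{2}+\frac{m_2v_2^2}{2}+\kappa_\delta(x_1)+\kappa_\delta(X-x_1)+\kappa_\delta(x_2-X)+\kappa_\delta(1-x_2)$ (piston at $X$, gas particles of masses $m_1,m_2$ at $x_1<X<x_2$), with $\varepsilon=M^{-1/2}$, $W=V/\varepsilon$. Energies $E_1=\frac12m_1v_1^2+\kappa_\delta(x_1)+\kappa_\delta(X-x_1)$, $E_2=\frac12m_2v_2^2+\kappa_\delta(x_2-X)+\kappa_\delta(1-x_2)$; slow variables $h=(X,W,E_1,E_2)$. $z^\delta_\varepsilon(t)$ denotes the phase point at time $t$ and $h^\delta_\varepsilon(t)$ its slow variables. Define $H^\delta(z)=\bigl(W,\ -\kappa'_\delta(X-x_1)+\kappa'_\delta(x_2-X),\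 W\kappa'_\delta(X-x_1),\ -W\kappa'_\delta(x_2-X)\bigr)$, so that $dh^\delta_\varepsilon/dt=\varepsilon H^\delta(z^\delta_\varepsilon)$. Periods: for $\delta>0$, $a=\delta\kappa^{-1}(E)$ ($\kappa^{-1}$ the inverse of $\kappa|_{[0,1]}$), $T_1(X,E,\delta)=2\int_a^{X-a}\sqrt{\frac{m_1/2}{E-\kappa_\delta(s)-\kappa_\delta(X-s)}}ds$, $T_2(X,E,\delta)=2\int_{X+a}^{1-a}\sqrt{\frac{m_2/2}{E-\kappa_\delta(s-X)-\kappa_\delta(1-s)}}ds$. Averaged field $\bar H^\delta(h)=\bigl(W,\ \tfrac{\sqrt{8m_1E_1}}{T_1}-\tfrac{\sqrt{8m_2E_2}}{T_2},\ -W\tfrac{\sqrt{8m_1E_1}}{T_1},\ W\tfrac{\sqrt{8m_2E_2}}{T_2}\bigr)$ with $T_i=T_i(X,E_i,\delta)$; $\bar h^\delta$ solves $d\bar h^\delta/d\tau=\bar H^\delta(\bar h^\delta)$, $\bar h^\delta(0)=h^\delta_\varepsilon(0)$. $\mathcal V\subset\mathbb R^4$ is compact with $h\in\mathcal V\Rightarrow X\in A,W\in B,E_i\in C$ for compact $A\subset(0,1)$, $B\subset\mathbb R$, $C\subset(0,\kappa(0))$. $T>0$ is fixed and $T^\delta_\varepsilon=\inf\{\tau\ge0:\bar h^\delta(\tau)\notin\mathcal V\text{ or }h^\delta_\varepsilon(\tau/\varepsilon)\notin\mathcal V\}$. *)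

theory Defs
  imports "HOL-Analysis.Analysis"
begin

text \<open>Phase point z = (X, V, x1, v1, x2, v2) (piston position/velocity, gas particle
positions/velocities). Slow variables h = (X, W, E1, E2).\<close>

type_synonym phase = "real \<times> real \<times> real \<times> real \<times> real \<times> real"
type_synonym slow = "real \<times> real \<times> real \<times> real"

definition kd :: "(real \<Rightarrow> real) \<Rightarrow> real \<Rightarrow> real \<Rightarrow> real" where
  "kd k \<delta> x = k (x / \<delta>)"

definition kd' :: "(real \<Rightarrow> real) \<Rightarrow> real \<Rightarrow> real \<Rightarrow> real" where
  "kd' kp \<delta> x = kp (x / \<delta>) / \<delta>"

text \<open>Hamiltonian vector field, with piston mass M = eps^(-2).\<close>
definition field :: "(real \<Rightarrow> real) \<Rightarrow> real \<Rightarrow> real \<Rightarrow> real \<Rightarrow> real \<Rightarrow> phase \<Rightarrow> phase" where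
  "field kp m1 m2 \<epsilon> \<delta> = (\<lambda>(X, V, x1, v1, x2, v2).
     (V,
      \<epsilon>\<^sup>2 * (- kd' kp \<delta> (X - x1) + kd' kp \<delta> (x2 - X)),
      v1,
      (- kd' kp \<delta> x1 + kd' kp \<delta> (X - x1)) / m1,
      v2,
      (- kd' kp \<delta> (x2 - X) + kd' kp \<delta> (1 - x2)) / m2))"

definition slowvars :: "(real \<Rightarrow> real) \<Rightarrow> real \<Rightarrow> real \<Rightarrow> real \<Rightarrow> real \<Rightarrow> phase \<Rightarrow> slow" where
  "slowvars k m1 m2 \<epsilon> \<delta> = (\<lambda>(X, V, x1, v1, x2, v2).
     (X, V / \<epsilon>,
      m1 * v1\<^sup>2 / 2 + kd k \<delta> x1 + kd k \<delta> (X - x1),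
      m2 * v2\<^sup>2 / 2 + kd k \<delta> (x2 - X) + kd k \<delta> (1 - x2)))"

definition Hfield :: "(real \<Rightarrow> real) \<Rightarrow> real \<Rightarrow> real \<Rightarrow> phase \<Rightarrow> slow" where
  "Hfield kp \<epsilon> \<delta> = (\<lambda>(X, V, x1, v1, x2, v2).
     (V / \<epsilon>,
      - kd' kp \<delta> (X - x1) + kd' kp \<delta> (x2 - X),
      (V / \<epsilon>) * kd' kp \<delta> (X - x1),
      - (V / \<epsilon>) * kd' kp \<delta> (x2 - X)))"

definition kinv :: "(real \<Rightarrow> real) \<Rightarrow> real \<Rightarrow> real" where
  "kinv k E = (THE s. s \<in> {0..1} \<and> k s = E)"

definition Tper1 :: "(real \<Rightarrow> real) \<Rightarrow> real \<Rightarrow> real \<Rightarrow> real \<Rightarrow> real \<Rightarrow> real" where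
  "Tper1 k m1 X E \<delta> = (let a = \<delta> * kinv k E in
     2 * integral {a .. X - a} (\<lambda>s. sqrt ((m1 / 2) / (E - kd k \<delta> s - kd k \<delta> (X - s)))))"

definition Tper2 :: "(real \<Rightarrow> real) \<Rightarrow> real \<Rightarrow> real \<Rightarrow> real \<Rightarrow> real \<Rightarrow> real" where
  "Tper2 k m2 X E \<delta> = (let a = \<delta> * kinv k E in
     2 * integral {X + a .. 1 - a} (\<lambda>s. sqrt ((m2 / 2) / (E - kd k \<delta> (s - X) - kd k \<delta> (1 - s)))))"

definition Hbar :: "(real \<Rightarrow> real) \<Rightarrow> real \<Rightarrow> real \<Rightarrow> real \<Rightarrow> slow \<Rightarrow> slow" where
  "Hbar k m1 m2 \<delta> = (\<lambda>(X, W, E1, E2).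
     (W,
      sqrt (8 * m1 * E1) / Tper1 k m1 X E1 \<delta> - sqrt (8 * m2 * E2) / Tper2 k m2 X E2 \<delta>,
      - W * sqrt (8 * m1 * E1) / Tper1 k m1 X E1 \<delta>,
      W * sqrt (8 * m2 * E2) / Tper2 k m2 X E2 \<delta>))"

text \<open>min(T, T^delta_eps): infimum of T and the exit times.\<close>
definition cutoff :: "slow set \<Rightarrow> real \<Rightarrow> (real \<Rightarrow> slow) \<Rightarrow> (real \<Rightarrow> slow) \<Rightarrow> real \<Rightarrow> real" where
  "cutoff Vs T hbar h \<epsilon> = Inf (insert T {\<tau>. 0 \<le> \<tau> \<and> (hbar \<tau> \<notin> Vs \<or> h (\<tau> / \<epsilon>) \<notin> Vs)})"

end

theory Submission
  imports Defs
begin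
lemma kp_gt1:
  assumes k_deriv: "\<And>x. (k has_real_derivative kp x) (at x)"
    and k_zero: "\<And>x. x \<ge> 1 \<Longrightarrow> k x = 0"
    and "(y::real) > 1"
  shows "kp y = 0"
proof -
  have "((\<lambda>x. 0::real) has_real_derivative kp y) (at y)"
    using k_deriv[of y] 
    by (rule has_field_derivative_transform_within_open[where S="{1<..}"]) (use assms in auto)
  from DERIV_unique[OF this DERIV_const] show ?thesis by simp
qed

lemma kp_1:
  assumes k_deriv: "\<And>x. (k has_real_derivative kp x) (at x)"
    and kp_deriv: "\<And>x. (kp has_real_derivative kpp x) (at x)"
    and k_zero: "\<And>x. x \<ge> 1 \<Longrightarrow> k x = 0"
  shows "kp 1 = 0"
proof -
  have c: "isCont kp 1" using kp_deriv DERIV_isCont by blast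
  have "((\<lambda>n. kp (1 + 1 / (real n + 1))) \<longlonglongrightarrow> kp 1)"
  proof (rule isCont_tendsto_compose[OF c])
    have "(\<lambda>n. 1 + inverse (real (Suc n))) \<longlonglongrightarrow> 1 + 0"
      by (intro tendsto_add tendsto_const LIMSEQ_inverse_real_of_nat)
    then show "(\<lambda>n. 1 + 1 / (real n + 1)) \<longlonglongrightarrow> 1"
      by (simp add: divide_inverse add.commute)
  qed
  moreover have "(\<lambda>n. kp (1 + 1 / (real n + 1))) = (\<lambda>n. 0)"
    using kp_gt1[OF k_deriv k_zero] by (auto intro!: ext)
  ultimately have "(\<lambda>n. (0::real)) \<longlonglongrightarrow> kp 1" by simp
  from LIMSEQ_unique[OF this tendsto_const] show ?thesis by simp
qed

lemma kp_nonpos: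
  assumes k_deriv: "\<And>x. (k has_real_derivative kp x) (at x)"
    and kp_deriv: "\<And>x. (kp has_real_derivative kpp x) (at x)"
    and k_zero: "\<And>x. x \<ge> 1 \<Longrightarrow> k x = 0"
    and kp_neg: "\<And>x. x < 1 \<Longrightarrow> kp x < 0"
  shows "kp y \<le> 0"
proof (cases y "1::real" rule: linorder_cases)
  case less then show ?thesis using kp_neg[of y] by simp
next
  case equal then show ?thesis using kp_1[OF k_deriv kp_deriv k_zero] by simp
next
  case greater then show ?thesis using kp_gt1[OF k_deriv k_zero, of y] by simp
qed

lemma k_nonneg:
  assumes k_deriv: "\<And>x. (k has_real_derivative kp x) (at x)"
    and k_zero: "\<And>x. x \<ge> 1 \<Longrightarrow> k x = 0"
    and kp_neg: "\<And>x. x < 1 \<Longrightarrow> kp x < 0"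
  shows "k y \<ge> 0"
proof (cases "y \<ge> 1")
  case True then show ?thesis using k_zero by simp
next
  case False
  have "k y \<ge> k 1"
    apply (rule DERIV_nonpos_imp_decreasing_open[of y 1 k])
    using False apply simp
    subgoal for x using k_deriv[of x] kp_neg[of x] by (intro exI[of _ "kp x"]) simp
    using k_deriv by (intro continuous_at_imp_continuous_on ballI DERIV_isCont) blast
  then show ?thesis using k_zero by simp
qed

lemma k_ge0:
  assumes k_deriv: "\<And>x. (k has_real_derivative kp x) (at x)"
    and kp_neg: "\<And>x. x < 1 \<Longrightarrow> kp x < 0"
    and "y \<le> 0"
  shows "k y \<ge> k 0"
    apply (rule DERIV_nonpos_imp_decreasing_open[of y 0 k])
    using assms apply simp
    subgoal for x using k_deriv[of x] kp_neg[of x] by (intro exI[of _ "kp x"]) simp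
    using k_deriv by (intro continuous_at_imp_continuous_on ballI DERIV_isCont) blast


lemma integ_bound:
  fixes G g P f :: "real \<Rightarrow> real"
  assumes ab: "a \<le> b"
    and der: "\<And>t. t \<in> {a..b} \<Longrightarrow> (G has_real_derivative g t) (at t within {a..b})"
    and cP: "continuous_on {a..b} P" and cf: "continuous_on {a..b} f"
    and le1: "\<And>t. t \<in> {a..b} \<Longrightarrow> c * P t \<le> f t - g t"
    and le2: "\<And>t. t \<in> {a..b} \<Longrightarrow> f t \<le> c1"
    and Ga: "\<bar>G a\<bar> \<le> c2" and Gb: "\<bar>G b\<bar> \<le> c2"
  shows "c * integral {a..b} P \<le> c1 * (b - a) + 2 * c2"
proof -
  have gI: "(g has_integral (G b - G a)) {a..b}"
    by (rule fundamental_theorem_of_calculus[OF ab])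
      (use der in \<open>auto simp: has_real_derivative_iff_has_vector_derivative\<close>)
  have fI: "f integrable_on {a..b}" by (rule integrable_continuous_real) (rule cf)
  have PI: "P integrable_on {a..b}" by (rule integrable_continuous_real) (rule cP)
  have h1: "((\<lambda>t. c * P t) has_integral c * integral {a..b} P) {a..b}"
    using has_integral_mult_right[OF integrable_integral[OF PI]] by simp
  have h2: "((\<lambda>t. f t - g t) has_integral integral {a..b} f - (G b - G a)) {a..b}"
    using has_integral_diff[OF integrable_integral[OF fI] gI] by simp
  have i1: "c * integral {a..b} P \<le> integral {a..b} f - (G b - G a)"
    by (rule has_integral_le[OF h1 h2]) (use le1 in auto)
  have "integral {a..b} f \<le> integral {a..b} (\<lambda>_. c1)"
    by (rule integral_le[OF fI]) (use le2 in auto)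
  also have "\<dots> = c1 * (b - a)" using ab by simp
  finally show ?thesis using i1 Ga Gb by linarith
qed

lemma closed_ext:
  fixes z :: "real \<Rightarrow> 'a::topological_space"
  assumes ab: "a < b" and cz: "continuous_on {a..b} z" and cF: "closed F"
    and inF: "\<And>t. t \<in> {a..<b} \<Longrightarrow> z t \<in> F" and t: "t \<in> {a..b}"
  shows "z t \<in> F"
proof -
  have "z ` closure {a..<b} \<subseteq> F"
    by (rule image_closure_subset) (use ab cz cF inF in auto)
  moreover have "closure {a..<b} = {a..b}" using ab by (rule closure_atLeastLessThan)
  ultimately show ?thesis using t by blast
qed

lemma wallterm:
  fixes kp :: "real \<Rightarrow> real"
  assumes "\<delta> > 0" "\<And>y. 1 \<le> y \<Longrightarrow> kp y = 0" "\<And>y. kp y \<le> 0"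
  shows "0 \<le> (- kp (u / \<delta>) / \<delta>) * (\<delta> - u)"
proof (cases "u < \<delta>")
  case True
  have "0 \<le> - kp (u / \<delta>) / \<delta>" using assms(1) assms(3)[of "u/\<delta>"] by (simp add: divide_nonpos_pos)
  then show ?thesis by (rule mult_nonneg_nonneg[OF _]) (use True in simp)
next
  case False
  then have "1 \<le> u / \<delta>" using assms(1) by simp
  then show ?thesis using assms(2) by simp
qed

lemma pistonterm:
  fixes kp :: "real \<Rightarrow> real"
  assumes "\<delta> > 0" "\<And>y. 1 \<le> y \<Longrightarrow> kp y = 0" "\<And>y. kp y \<le> 0"
    and "s < \<delta> \<Longrightarrow> c \<le> w"
  shows "c * (- kp (s / \<delta>) / \<delta>) \<le> w * (- kp (s / \<delta>) / \<delta>)"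
proof (cases "s < \<delta>")
  case True
  have "0 \<le> - kp (s / \<delta>) / \<delta>" using assms(1) assms(3)[of "s/\<delta>"] by (simp add: divide_nonpos_pos)
  then show ?thesis by (rule mult_right_mono[OF assms(4)[OF True]])
next
  case False
  then have "1 \<le> s / \<delta>" using assms(1) by simp
  then show ?thesis using assms(2) by simp
qed

lemma hvd_fst: "(z has_vector_derivative D) F \<Longrightarrow> ((\<lambda>t. fst (z t)) has_vector_derivative fst D) F"
  by (rule bounded_linear.has_vector_derivative[OF bounded_linear_fst])
lemma hvd_snd: "(z has_vector_derivative D) F \<Longrightarrow> ((\<lambda>t. snd (z t)) has_vector_derivative snd D) F"
  by (rule bounded_linear.has_vector_derivative[OF bounded_linear_snd])

lemma abs_le_sq: "\<bar>v::real\<bar> \<le> 1 + v^2"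
proof -
  have sq: "v^2 = \<bar>v\<bar> * \<bar>v\<bar>" by (simp add: power2_eq_square abs_mult_self_eq)
  show ?thesis
  proof (cases "\<bar>v\<bar> \<le> 1")
    case True then show ?thesis by (simp add: add_increasing2)
  next
    case False
    then have "\<bar>v\<bar> * 1 \<le> \<bar>v\<bar> * \<bar>v\<bar>" by (intro mult_left_mono) auto
    then show ?thesis using sq by simp
  qed
qed

lemma norm4: "norm ((p::real, q::real, r::real, s::real)) \<le> \<bar>p\<bar> + \<bar>q\<bar> + \<bar>r\<bar> + \<bar>s\<bar>"
proof -
  have "norm (p, q, r, s) \<le> norm p + norm (q, r, s)" by (rule norm_Pair_le)
  also have "norm (q, r, s) \<le> norm q + norm (r, s)" by (rule norm_Pair_le)
  also have "norm (r, s) \<le> norm r + norm s" by (rule norm_Pair_le)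
  finally show ?thesis by simp
qed

lemma pos_of_k:
  fixes k :: "real \<Rightarrow> real"
  assumes kge: "\<And>y. y \<le> 0 \<Longrightarrow> k 0 \<le> k y" and "k (u / \<delta>) < k 0" "(\<delta>::real) > 0"
  shows "u > 0"
proof (rule ccontr)
  assume "\<not> u > 0"
  then have "u / \<delta> \<le> 0" using assms(3) by (simp add: divide_nonpos_pos)
  then show False using kge[of "u/\<delta>"] assms(2) by simp
qed

lemma core:
  fixes k kp :: "real \<Rightarrow> real" and m1 m2 T a bm \<delta> \<epsilon> T' TT :: real and Vs :: "slow set"
    and A B C :: "real set" and z :: "real \<Rightarrow> phase" and hb :: "real \<Rightarrow> slow"
  assumes kp_le: "\<And>y. kp y \<le> 0" and kp_ge1: "\<And>y. 1 \<le> y \<Longrightarrow> kp y = 0"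
    and knn: "\<And>y. 0 \<le> k y" and kge: "\<And>y. y \<le> 0 \<Longrightarrow> k 0 \<le> k y"
    and kpc: "continuous_on UNIV kp"
    and m1: "m1 > 0" and m2: "m2 > 0" and T_pos: "T > 0"
    and a0: "0 < a" and a1: "a \<le> 1/2" and aA: "\<And>X. X \<in> A \<Longrightarrow> a \<le> X \<and> X \<le> 1 - a"
    and bm0: "0 \<le> bm" and bB: "\<And>w. w \<in> B \<Longrightarrow> \<bar>w\<bar> \<le> bm"
    and Csub: "C \<subseteq> {0<..<k 0}"
    and V_sub: "\<And>X W E1 E2. (X, W, E1, E2) \<in> Vs \<Longrightarrow> X \<in> A \<and> W \<in> B \<and> E1 \<in> C \<and> E2 \<in> C"
    and d0: "0 < \<delta>" and d1: "\<delta> \<le> a/4" and e0: "0 < \<epsilon>"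
    and zder: "\<forall>t\<ge>0. (z has_vector_derivative field kp m1 m2 \<epsilon> \<delta> (z t)) (at t within {0..})"
    and T1: "0 \<le> T'" and T2: "T' \<le> TT"
    and T3: "TT \<le> cutoff Vs T hb (\<lambda>t. slowvars k m1 m2 \<epsilon> \<delta> (z t)) \<epsilon> / \<epsilon>"
  shows "norm (integral {T'..TT} (\<lambda>s. Hfield kp \<epsilon> \<delta> (z s)))
     \<le> (bm + 2*(1+bm)*((2/a)*(2*k 0 + 2*(m1+m2+2*k 0))) + 1) * max 1 (TT - T')"
proof (cases "T' = TT")
  case True
  have "k 0 \<ge> 0" using knn by simp
  then have "0 \<le> (bm + 2*(1+bm)*((2/a)*(2*k 0 + 2*(m1+m2+2*k 0))) + 1) * max 1 (TT - T')"
    using bm0 a0 m1 m2 by (intro mult_nonneg_nonneg add_nonneg_nonneg) auto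
  then show ?thesis using True by simp
next
  case False
  then have TT': "T' < TT" using T2 by simp
  define S where "S = {T'..TT}"
  define X where "X = (\<lambda>t. fst (z t))"
  define V where "V = (\<lambda>t. fst (snd (z t)))"
  define x1 where "x1 = (\<lambda>t. fst (snd (snd (z t))))"
  define v1 where "v1 = (\<lambda>t. fst (snd (snd (snd (z t)))))"
  define x2 where "x2 = (\<lambda>t. fst (snd (snd (snd (snd (z t))))))"
  define v2 where "v2 = (\<lambda>t. snd (snd (snd (snd (snd (z t))))))"
  have zeq: "\<And>t. z t = (X t, V t, x1 t, v1 t, x2 t, v2 t)"
    by (simp add: X_def V_def x1_def v1_def x2_def v2_def)
  have zd: "(z has_vector_derivative field kp m1 m2 \<epsilon> \<delta> (z t)) (at t within S)" if "t \<in> S" for t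
  proof -
    have "t \<ge> 0" using that T1 by (simp add: S_def)
    then have "(z has_vector_derivative field kp m1 m2 \<epsilon> \<delta> (z t)) (at t within {0..})"
      using zder by blast
    moreover have "S \<subseteq> {0..}" using T1 by (auto simp: S_def)
    ultimately show ?thesis by (rule has_vector_derivative_within_subset)
  qed
  have fieldeq: "field kp m1 m2 \<epsilon> \<delta> (z t) = (V t, \<epsilon>\<^sup>2 * (- kd' kp \<delta> (X t - x1 t) + kd' kp \<delta> (x2 t - X t)),
      v1 t, (- kd' kp \<delta> (x1 t) + kd' kp \<delta> (X t - x1 t)) / m1,
      v2 t, (- kd' kp \<delta> (x2 t - X t) + kd' kp \<delta> (1 - x2 t)) / m2)" for t
    by (simp add: zeq field_def)
  have dx1: "(x1 has_real_derivative v1 t) (at t within S)" if "t \<in> S" for t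
  proof -
    have "((\<lambda>t. fst (snd (snd (z t)))) has_vector_derivative fst (snd (snd (field kp m1 m2 \<epsilon> \<delta> (z t))))) (at t within S)"
      by (intro hvd_fst hvd_snd zd that)
    then show ?thesis by (simp add: fieldeq x1_def has_real_derivative_iff_has_vector_derivative)
  qed
  have dv1: "(v1 has_real_derivative (- kd' kp \<delta> (x1 t) + kd' kp \<delta> (X t - x1 t)) / m1) (at t within S)" if "t \<in> S" for t
  proof -
    have "((\<lambda>t. fst (snd (snd (snd (z t))))) has_vector_derivative fst (snd (snd (snd (field kp m1 m2 \<epsilon> \<delta> (z t)))))) (at t within S)"
      by (intro hvd_fst hvd_snd zd that)
    then show ?thesis by (simp add: fieldeq v1_def has_real_derivative_iff_has_vector_derivative)
  qed
  have dx2: "(x2 has_real_derivative v2 t) (at t within S)" if "t \<in> S" for t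
  proof -
    have "((\<lambda>t. fst (snd (snd (snd (snd (z t)))))) has_vector_derivative fst (snd (snd (snd (snd (field kp m1 m2 \<epsilon> \<delta> (z t))))))) (at t within S)"
      by (intro hvd_fst hvd_snd zd that)
    then show ?thesis by (simp add: fieldeq x2_def has_real_derivative_iff_has_vector_derivative)
  qed
  have dv2: "(v2 has_real_derivative (- kd' kp \<delta> (x2 t - X t) + kd' kp \<delta> (1 - x2 t)) / m2) (at t within S)" if "t \<in> S" for t
  proof -
    have "((\<lambda>t. snd (snd (snd (snd (snd (z t)))))) has_vector_derivative snd (snd (snd (snd (snd (field kp m1 m2 \<epsilon> \<delta> (z t))))))) (at t within S)"
      by (intro hvd_snd zd that)
    then show ?thesis by (simp add: fieldeq v2_def has_real_derivative_iff_has_vector_derivative)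
  qed
  have cz: "continuous_on S z"
    using zd has_vector_derivative_continuous continuous_on_eq_continuous_within by blast
  have cX: "continuous_on S X" unfolding X_def by (intro continuous_intros cz)
  have cV: "continuous_on S V" unfolding V_def by (intro continuous_intros cz)
  have cx1: "continuous_on S x1" unfolding x1_def by (intro continuous_intros cz)
  have cv1: "continuous_on S v1" unfolding v1_def by (intro continuous_intros cz)
  have cx2: "continuous_on S x2" unfolding x2_def by (intro continuous_intros cz)
  have cv2: "continuous_on S v2" unfolding v2_def by (intro continuous_intros cz)
  have inV: "slowvars k m1 m2 \<epsilon> \<delta> (z t) \<in> Vs" if t: "t \<in> {T'..<TT}" for t
  proof (rule ccontr)
    assume nV: "slowvars k m1 m2 \<epsilon> \<delta> (z t) \<notin> Vs"
    have "cutoff Vs T hb (\<lambda>t. slowvars k m1 m2 \<epsilon> \<delta> (z t)) \<epsilon> \<le> t * \<epsilon>"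
      unfolding cutoff_def
    proof (rule cInf_lower)
      show "t * \<epsilon> \<in> insert T {\<tau>. 0 \<le> \<tau> \<and> (hb \<tau> \<notin> Vs \<or> slowvars k m1 m2 \<epsilon> \<delta> (z (\<tau> / \<epsilon>)) \<notin> Vs)}"
        using t T1 e0 nV by simp
      show "bdd_below (insert T {\<tau>. 0 \<le> \<tau> \<and> (hb \<tau> \<notin> Vs \<or> slowvars k m1 m2 \<epsilon> \<delta> (z (\<tau> / \<epsilon>)) \<notin> Vs)})"
        using T_pos by (intro bdd_belowI[where m=0]) auto
    qed
    moreover have "t * \<epsilon> < cutoff Vs T hb (\<lambda>t. slowvars k m1 m2 \<epsilon> \<delta> (z t)) \<epsilon>"
      using t T3 e0 by (simp add: pos_less_divide_eq[symmetric])
    ultimately show False by simp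
  qed
  define F where "F = {p::phase. a \<le> fst p \<and> fst p \<le> 1 - a \<and> \<bar>fst (snd p)\<bar> \<le> bm * \<epsilon>
     \<and> m1 * (fst (snd (snd (snd p))))\<^sup>2 \<le> 2 * k 0 \<and> m2 * (snd (snd (snd (snd (snd p)))))\<^sup>2 \<le> 2 * k 0
     \<and> 0 \<le> fst (snd (snd p)) \<and> fst (snd (snd p)) \<le> fst p \<and> fst p \<le> fst (snd (snd (snd (snd p))))
     \<and> fst (snd (snd (snd (snd p)))) \<le> 1}"
  have closedF: "closed F" unfolding F_def
    by (intro closed_Collect_conj closed_Collect_le continuous_intros)
  have zF0: "z t \<in> F" if t: "t \<in> {T'..<TT}" for t
  proof -
    have sv: "slowvars k m1 m2 \<epsilon> \<delta> (z t) = (X t, V t / \<epsilon>,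
        m1 * (v1 t)\<^sup>2 / 2 + k (x1 t / \<delta>) + k ((X t - x1 t) / \<delta>),
        m2 * (v2 t)\<^sup>2 / 2 + k ((x2 t - X t) / \<delta>) + k ((1 - x2 t) / \<delta>))"
      by (simp add: zeq slowvars_def kd_def)
    have H: "X t \<in> A \<and> V t / \<epsilon> \<in> B \<and> m1 * (v1 t)\<^sup>2 / 2 + k (x1 t / \<delta>) + k ((X t - x1 t) / \<delta>) \<in> C
       \<and> m2 * (v2 t)\<^sup>2 / 2 + k ((x2 t - X t) / \<delta>) + k ((1 - x2 t) / \<delta>) \<in> C"
      using V_sub inV[OF t] unfolding sv by blast
    have E1: "m1 * (v1 t)\<^sup>2 / 2 + k (x1 t / \<delta>) + k ((X t - x1 t) / \<delta>) < k 0" using H Csub by auto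
    have E2: "m2 * (v2 t)\<^sup>2 / 2 + k ((x2 t - X t) / \<delta>) + k ((1 - x2 t) / \<delta>) < k 0" using H Csub by auto
    have sq1: "0 \<le> m1 * (v1 t)\<^sup>2" using m1 by simp
    have sq2: "0 \<le> m2 * (v2 t)\<^sup>2" using m2 by simp
    have "k ((x1 t) / \<delta>) < k 0" using E1 sq1 knn[of "(X t - x1 t) / \<delta>"] by simp
    then have p1: "x1 t > 0" using pos_of_k[of k "x1 t" \<delta>, OF kge _ d0] by blast
    have "k ((X t - x1 t) / \<delta>) < k 0" using E1 sq1 knn[of "x1 t / \<delta>"] by simp
    then have p2: "X t - x1 t > 0" using pos_of_k[of k "X t - x1 t" \<delta>, OF kge _ d0] by blast
    have "k ((x2 t - X t) / \<delta>) < k 0" using E2 sq2 knn[of "(1 - x2 t) / \<delta>"] by simp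
    then have p3: "x2 t - X t > 0" using pos_of_k[of k "x2 t - X t" \<delta>, OF kge _ d0] by blast
    have "k ((1 - x2 t) / \<delta>) < k 0" using E2 sq2 knn[of "(x2 t - X t) / \<delta>"] by simp
    then have p4: "1 - x2 t > 0" using pos_of_k[of k "1 - x2 t" \<delta>, OF kge _ d0] by blast
    have v1b: "m1 * (v1 t)\<^sup>2 \<le> 2 * k 0" using E1 knn[of "x1 t / \<delta>"] knn[of "(X t - x1 t) / \<delta>"] by linarith
    have v2b: "m2 * (v2 t)\<^sup>2 \<le> 2 * k 0" using E2 knn[of "(x2 t - X t) / \<delta>"] knn[of "(1 - x2 t) / \<delta>"] by linarith
    have "\<bar>V t / \<epsilon>\<bar> \<le> bm" using H bB by blast
    then have Vb: "\<bar>V t\<bar> \<le> bm * \<epsilon>" using e0 by (simp add: abs_div pos_divide_le_eq)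
    have Xa: "a \<le> X t \<and> X t \<le> 1 - a" using H aA by blast
    show ?thesis unfolding F_def using Xa Vb v1b v2b p1 p2 p3 p4 by (simp add: zeq)
  qed
  have zF: "z t \<in> F" if t: "t \<in> S" for t
    by (rule closed_ext[OF TT' _ closedF zF0]) (use cz t in \<open>auto simp: S_def\<close>)
  have Xa: "a \<le> X t" "X t \<le> 1 - a" and Vb: "\<bar>V t\<bar> \<le> bm * \<epsilon>"
    and v1b: "m1 * (v1 t)\<^sup>2 \<le> 2 * k 0" and v2b: "m2 * (v2 t)\<^sup>2 \<le> 2 * k 0"
    and pos: "0 \<le> x1 t" "x1 t \<le> X t" "X t \<le> x2 t" "x2 t \<le> 1"
    if "t \<in> S" for t
    using zF[OF that] by (simp_all add: F_def zeq)

  have kpp: "\<And>y. kp y \<le> 0" by (rule kp_le)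
  define P1 where "P1 = (\<lambda>t. - kd' kp \<delta> (X t - x1 t))"
  define P2 where "P2 = (\<lambda>t. - kd' kp \<delta> (x2 t - X t))"
  have P1nn: "0 \<le> P1 t" for t
    using kp_le[of "(X t - x1 t) / \<delta>"] d0 by (simp add: P1_def kd'_def divide_nonpos_pos)
  have P2nn: "0 \<le> P2 t" for t
    using kp_le[of "(x2 t - X t) / \<delta>"] d0 by (simp add: P2_def kd'_def divide_nonpos_pos)
  have cP1: "continuous_on S P1"
  proof -
    have "continuous_on S (\<lambda>t. kp ((X t - x1 t) / \<delta>))"
      by (rule continuous_on_compose2[OF kpc]) (use d0 in \<open>auto intro!: continuous_intros cX cx1\<close>)
    then show ?thesis unfolding P1_def kd'_def using d0 by (intro continuous_intros) auto
  qed
  have cP2: "continuous_on S P2"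
  proof -
    have "continuous_on S (\<lambda>t. kp ((x2 t - X t) / \<delta>))"
      by (rule continuous_on_compose2[OF kpc]) (use d0 in \<open>auto intro!: continuous_intros cX cx2\<close>)
    then show ?thesis unfolding P2_def kd'_def using d0 by (intro continuous_intros) auto
  qed
  define c2 where "c2 = m1 + m2 + 2 * k 0"
  have k00: "0 \<le> k 0" using knn by simp
  have I1: "a/2 * integral S P1 \<le> 2 * k 0 * (TT - T') + 2 * c2"
    unfolding S_def
  proof (rule integ_bound[where G="\<lambda>t. m1 * v1 t * (x1 t - \<delta>)"
      and g="\<lambda>t. m1 * ((- kd' kp \<delta> (x1 t) + kd' kp \<delta> (X t - x1 t)) / m1) * (x1 t - \<delta>) + (v1 t - 0) * (m1 * v1 t)"
      and f="\<lambda>t. m1 * (v1 t)\<^sup>2"])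
    show "T' \<le> TT" by fact
    show "((\<lambda>t. m1 * v1 t * (x1 t - \<delta>)) has_real_derivative
       m1 * ((- kd' kp \<delta> (x1 t) + kd' kp \<delta> (X t - x1 t)) / m1) * (x1 t - \<delta>) + (v1 t - 0) * (m1 * v1 t))
       (at t within {T'..TT})" if "t \<in> {T'..TT}" for t
      using that unfolding S_def[symmetric]
      by (intro DERIV_mult DERIV_cmult DERIV_diff DERIV_const dx1 dv1)
    show "continuous_on {T'..TT} P1" using cP1 by (simp add: S_def)
    show "continuous_on {T'..TT} (\<lambda>t. m1 * (v1 t)\<^sup>2)" using cv1 unfolding S_def by (intro continuous_intros)
    show "a / 2 * P1 t \<le> m1 * (v1 t)\<^sup>2 - (m1 * ((- kd' kp \<delta> (x1 t) + kd' kp \<delta> (X t - x1 t)) / m1) * (x1 t - \<delta>) + (v1 t - 0) * (m1 * v1 t))"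
      if t: "t \<in> {T'..TT}" for t
    proof -
      have tS: "t \<in> S" using t by (simp add: S_def)
      have w: "0 \<le> (- kp (x1 t / \<delta>) / \<delta>) * (\<delta> - x1 t)"
        by (rule wallterm[OF d0 kp_ge1 kp_le])
      have p: "a/2 * (- kp ((X t - x1 t) / \<delta>) / \<delta>) \<le> (x1 t - \<delta>) * (- kp ((X t - x1 t) / \<delta>) / \<delta>)"
      proof (rule pistonterm[OF d0 kp_ge1 kp_le])
        assume "X t - x1 t < \<delta>"
        moreover have "a \<le> X t" using Xa(1)[OF tS] .
        ultimately show "a / 2 \<le> x1 t - \<delta>" using d1 by linarith
      qed
      have eq: "m1 * (v1 t)\<^sup>2 - (m1 * ((- kd' kp \<delta> (x1 t) + kd' kp \<delta> (X t - x1 t)) / m1) * (x1 t - \<delta>) + (v1 t - 0) * (m1 * v1 t))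
          = (- kp (x1 t / \<delta>) / \<delta>) * (\<delta> - x1 t) + (x1 t - \<delta>) * (- kp ((X t - x1 t) / \<delta>) / \<delta>)"
        using m1 d0 by (simp add: kd'_def power2_eq_square field_simps)
      show ?thesis using w p eq by (simp add: P1_def kd'_def)
    qed
    show "m1 * (v1 t)\<^sup>2 \<le> 2 * k 0" if "t \<in> {T'..TT}" for t
      using v1b[of t] that by (simp add: S_def)
    have Gb: "\<bar>m1 * v1 t * (x1 t - \<delta>)\<bar> \<le> c2" if t: "t \<in> {T'..TT}" for t
    proof -
      have tS: "t \<in> S" using t by (simp add: S_def)
      have "\<bar>x1 t - \<delta>\<bar> \<le> 1" using pos[OF tS] d0 d1 a1 by linarith
      then have "\<bar>v1 t\<bar> * \<bar>x1 t - \<delta>\<bar> \<le> \<bar>v1 t\<bar> * 1"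
        by (intro mult_left_mono) auto
      then have "\<bar>m1 * v1 t * (x1 t - \<delta>)\<bar> \<le> m1 * \<bar>v1 t\<bar> * 1"
        using m1 by (simp add: abs_mult)
      also have "\<dots> \<le> m1 * (1 + (v1 t)\<^sup>2)" using m1 abs_le_sq[of "v1 t"] by simp
      also have "\<dots> \<le> c2" using v1b[OF tS] m2 k00 by (simp add: c2_def algebra_simps)
      finally show ?thesis .
    qed
    then show "\<bar>m1 * v1 T' * (x1 T' - \<delta>)\<bar> \<le> c2" "\<bar>m1 * v1 TT * (x1 TT - \<delta>)\<bar> \<le> c2"
      using T2 by auto
  qed

  have I2: "a/2 * integral S P2 \<le> 2 * k 0 * (TT - T') + 2 * c2"
    unfolding S_def
  proof (rule integ_bound[where G="\<lambda>t. m2 * v2 t * (x2 t - (1 - \<delta>))"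
      and g="\<lambda>t. m2 * ((- kd' kp \<delta> (x2 t - X t) + kd' kp \<delta> (1 - x2 t)) / m2) * (x2 t - (1 - \<delta>)) + (v2 t - 0) * (m2 * v2 t)"
      and f="\<lambda>t. m2 * (v2 t)\<^sup>2"])
    show "T' \<le> TT" by fact
    show "((\<lambda>t. m2 * v2 t * (x2 t - (1 - \<delta>))) has_real_derivative
       m2 * ((- kd' kp \<delta> (x2 t - X t) + kd' kp \<delta> (1 - x2 t)) / m2) * (x2 t - (1 - \<delta>)) + (v2 t - 0) * (m2 * v2 t))
       (at t within {T'..TT})" if "t \<in> {T'..TT}" for t
      using that unfolding S_def[symmetric]
      by (intro DERIV_mult DERIV_cmult DERIV_diff DERIV_const dx2 dv2)
    show "continuous_on {T'..TT} P2" using cP2 by (simp add: S_def)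
    show "continuous_on {T'..TT} (\<lambda>t. m2 * (v2 t)\<^sup>2)" using cv2 unfolding S_def by (intro continuous_intros)
    show "a / 2 * P2 t \<le> m2 * (v2 t)\<^sup>2 - (m2 * ((- kd' kp \<delta> (x2 t - X t) + kd' kp \<delta> (1 - x2 t)) / m2) * (x2 t - (1 - \<delta>)) + (v2 t - 0) * (m2 * v2 t))"
      if t: "t \<in> {T'..TT}" for t
    proof -
      have tS: "t \<in> S" using t by (simp add: S_def)
      have w: "0 \<le> (- kp ((1 - x2 t) / \<delta>) / \<delta>) * (\<delta> - (1 - x2 t))"
        by (rule wallterm[OF d0 kp_ge1 kp_le])
      have p: "a/2 * (- kp ((x2 t - X t) / \<delta>) / \<delta>) \<le> (1 - \<delta> - x2 t) * (- kp ((x2 t - X t) / \<delta>) / \<delta>)"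
      proof (rule pistonterm[OF d0 kp_ge1 kp_le])
        assume "x2 t - X t < \<delta>"
        moreover have "X t \<le> 1 - a" using Xa(2)[OF tS] .
        ultimately show "a / 2 \<le> 1 - \<delta> - x2 t" using d1 by linarith
      qed
      have eq: "m2 * (v2 t)\<^sup>2 - (m2 * ((- kd' kp \<delta> (x2 t - X t) + kd' kp \<delta> (1 - x2 t)) / m2) * (x2 t - (1 - \<delta>)) + (v2 t - 0) * (m2 * v2 t))
          = (- kp ((1 - x2 t) / \<delta>) / \<delta>) * (\<delta> - (1 - x2 t)) + (1 - \<delta> - x2 t) * (- kp ((x2 t - X t) / \<delta>) / \<delta>)"
        using m2 d0 by (simp add: kd'_def power2_eq_square field_simps)
      show ?thesis using w p eq by (simp add: P2_def kd'_def)
    qed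
    show "m2 * (v2 t)\<^sup>2 \<le> 2 * k 0" if "t \<in> {T'..TT}" for t
      using v2b[of t] that by (simp add: S_def)
    have Gb: "\<bar>m2 * v2 t * (x2 t - (1 - \<delta>))\<bar> \<le> c2" if t: "t \<in> {T'..TT}" for t
    proof -
      have tS: "t \<in> S" using t by (simp add: S_def)
      have "\<bar>x2 t - (1 - \<delta>)\<bar> \<le> 1" using pos[OF tS] Xa[OF tS] a0 d0 d1 a1 by linarith
      then have "\<bar>v2 t\<bar> * \<bar>x2 t - (1 - \<delta>)\<bar> \<le> \<bar>v2 t\<bar> * 1"
        by (intro mult_left_mono) auto
      then have "\<bar>m2 * v2 t * (x2 t - (1 - \<delta>))\<bar> \<le> m2 * \<bar>v2 t\<bar> * 1"
        using m2 by (simp add: abs_mult)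
      also have "\<dots> \<le> m2 * (1 + (v2 t)\<^sup>2)" using m2 abs_le_sq[of "v2 t"] by simp
      also have "\<dots> \<le> c2" using v2b[OF tS] m1 k00 by (simp add: c2_def algebra_simps)
      finally show ?thesis .
    qed
    then show "\<bar>m2 * v2 T' * (x2 T' - (1 - \<delta>))\<bar> \<le> c2" "\<bar>m2 * v2 TT * (x2 TT - (1 - \<delta>))\<bar> \<le> c2"
      using T2 by auto
  qed
  have HF: "(\<lambda>s. Hfield kp \<epsilon> \<delta> (z s)) = (\<lambda>s. (V s / \<epsilon>, P1 s - P2 s, - (V s / \<epsilon>) * P1 s, (V s / \<epsilon>) * P2 s))"
    by (rule ext) (simp add: Hfield_def zeq P1_def P2_def)
  define gb where "gb = (\<lambda>s. bm + (1 + bm) * (P1 s + P2 s))"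
  have intH: "(\<lambda>s. Hfield kp \<epsilon> \<delta> (z s)) integrable_on S"
  proof -
    have "continuous_on {T'..TT} (\<lambda>s. (V s / \<epsilon>, P1 s - P2 s, - (V s / \<epsilon>) * P1 s, (V s / \<epsilon>) * P2 s))"
      using cV cP1 cP2 e0 unfolding S_def by (intro continuous_intros) auto
    then show ?thesis unfolding HF S_def by (rule integrable_continuous_real)
  qed
  have hP1: "(P1 has_integral integral S P1) S" using cP1 unfolding S_def
    by (intro integrable_integral integrable_continuous_real)
  have hP2: "(P2 has_integral integral S P2) S" using cP2 unfolding S_def
    by (intro integrable_integral integrable_continuous_real)
  have hg: "(gb has_integral (bm * (TT - T') + (1 + bm) * (integral S P1 + integral S P2))) S"
  proof -
    have c: "((\<lambda>s. bm) has_integral (bm * (TT - T'))) S"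
      using has_integral_const_real[of bm T' TT] T2 by (simp add: S_def mult.commute)
    show ?thesis unfolding gb_def
      by (intro has_integral_add c has_integral_mult_right hP1 hP2)
  qed
  have nb: "norm (Hfield kp \<epsilon> \<delta> (z s)) \<le> gb s" if s: "s \<in> S" for s
  proof -
    have vb: "\<bar>V s / \<epsilon>\<bar> \<le> bm" using Vb[OF s] e0 by (simp add: abs_div pos_divide_le_eq)
    have "norm (Hfield kp \<epsilon> \<delta> (z s)) \<le> \<bar>V s / \<epsilon>\<bar> + \<bar>P1 s - P2 s\<bar> + \<bar>- (V s / \<epsilon>) * P1 s\<bar> + \<bar>(V s / \<epsilon>) * P2 s\<bar>"
    proof -
      have hs: "Hfield kp \<epsilon> \<delta> (z s) = (V s / \<epsilon>, P1 s - P2 s, - (V s / \<epsilon>) * P1 s, (V s / \<epsilon>) * P2 s)"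
        using fun_cong[OF HF, of s] by simp
      show ?thesis unfolding hs by (rule norm4)
    qed
    also have "\<dots> \<le> bm + (P1 s + P2 s) + bm * P1 s + bm * P2 s"
    proof -
      have "\<bar>- (V s / \<epsilon>) * P1 s\<bar> = \<bar>V s / \<epsilon>\<bar> * P1 s"
        using P1nn[of s] by (simp only: abs_mult abs_minus_cancel abs_of_nonneg)
      then have b1: "\<bar>- (V s / \<epsilon>) * P1 s\<bar> \<le> bm * P1 s"
        using mult_right_mono[OF vb P1nn[of s]] by linarith
      have "\<bar>(V s / \<epsilon>) * P2 s\<bar> = \<bar>V s / \<epsilon>\<bar> * P2 s"
        using P2nn[of s] by (simp only: abs_mult abs_minus_cancel abs_of_nonneg)
      then have b2: "\<bar>(V s / \<epsilon>) * P2 s\<bar> \<le> bm * P2 s"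
        using mult_right_mono[OF vb P2nn[of s]] by linarith
      have b3: "\<bar>P1 s - P2 s\<bar> \<le> P1 s + P2 s" using P1nn[of s] P2nn[of s] by linarith
      show ?thesis using vb b1 b2 b3 by linarith
    qed
    also have "\<dots> = gb s" by (simp add: gb_def algebra_simps)
    finally show ?thesis .
  qed
  have "norm (integral S (\<lambda>s. Hfield kp \<epsilon> \<delta> (z s))) \<le> integral S gb"
    by (rule integral_norm_bound_integral[OF intH _ nb]) (use hg in blast)
  also have "\<dots> = bm * (TT - T') + (1 + bm) * (integral S P1 + integral S P2)"
    using hg by (rule integral_unique)
  finally have main: "norm (integral S (\<lambda>s. Hfield kp \<epsilon> \<delta> (z s))) \<le> bm * (TT - T') + (1 + bm) * (integral S P1 + integral S P2)" .
  define M where "M = max 1 (TT - T')"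
  define K where "K = (2/a)*(2*k 0 + 2*(m1+m2+2*k 0))"
  have M1: "1 \<le> M" and MLe: "TT - T' \<le> M" by (simp_all add: M_def)
  have c20: "0 \<le> c2" using m1 m2 k00 by (simp add: c2_def)
  have lin: "2 * k 0 * (TT - T') + 2 * c2 \<le> (2 * k 0 + 2 * c2) * M"
  proof -
    have "2 * k 0 * (TT - T') \<le> 2 * k 0 * M" using MLe k00 by (intro mult_left_mono) auto
    moreover have "2 * c2 \<le> 2 * c2 * M" using M1 c20 by (simp add: mult_le_cancel_left1)
    ultimately show ?thesis by (simp add: algebra_simps)
  qed
  have J1: "integral S P1 \<le> K * M"
  proof -
    have "integral S P1 \<le> (2/a) * (2 * k 0 * (TT - T') + 2 * c2)"
      using I1 a0 by (simp add: field_simps)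
    also have "\<dots> \<le> (2/a) * ((2 * k 0 + 2 * c2) * M)" using lin a0 by (intro mult_left_mono) auto
    also have "(2/a) * ((2 * k 0 + 2 * c2) * M) = K * M"
      using a0 by (simp add: K_def c2_def field_simps)
    finally show ?thesis .
  qed
  have J2: "integral S P2 \<le> K * M"
  proof -
    have "integral S P2 \<le> (2/a) * (2 * k 0 * (TT - T') + 2 * c2)"
      using I2 a0 by (simp add: field_simps)
    also have "\<dots> \<le> (2/a) * ((2 * k 0 + 2 * c2) * M)" using lin a0 by (intro mult_left_mono) auto
    also have "(2/a) * ((2 * k 0 + 2 * c2) * M) = K * M"
      using a0 by (simp add: K_def c2_def field_simps)
    finally show ?thesis .
  qed
  have "(1 + bm) * (integral S P1 + integral S P2) \<le> (1 + bm) * (2 * K * M)"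
    using J1 J2 bm0 by (intro mult_left_mono) auto
  moreover have "bm * (TT - T') \<le> bm * M" using MLe bm0 by (intro mult_left_mono) auto
  moreover have "0 \<le> M" using M1 by simp
  ultimately have "norm (integral S (\<lambda>s. Hfield kp \<epsilon> \<delta> (z s))) \<le> (bm + 2 * (1 + bm) * K + 1) * M"
    using main by (simp add: algebra_simps)
  then show ?thesis by (simp add: S_def M_def K_def)
qed


theorem mainTheorem7:
  fixes k kp kpp :: "real \<Rightarrow> real" and m1 m2 T :: real
    and Vs :: "slow set" and A B C :: "real set"
  assumes k_deriv: "\<And>x. (k has_real_derivative kp x) (at x)"
    and kp_deriv: "\<And>x. (kp has_real_derivative kpp x) (at x)"
    and kpp_cont: "continuous_on UNIV kpp"
    and k_zero: "\<And>x. x \<ge> 1 \<Longrightarrow> k x = 0"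
    and kp_neg: "\<And>x. x < 1 \<Longrightarrow> kp x < 0"
    and masses: "m1 > 0" "m2 > 0"
    and T_pos: "T > 0"
    and V_compact: "compact Vs"
    and ABC: "compact A" "A \<subseteq> {0<..<1}" "compact B" "compact C" "C \<subseteq> {0<..<k 0}"
    and V_sub: "\<And>X W E1 E2. (X, W, E1, E2) \<in> Vs \<Longrightarrow> X \<in> A \<and> W \<in> B \<and> E1 \<in> C \<and> E2 \<in> C"
  shows "\<exists>\<delta>0 > 0. \<exists>\<epsilon>1 > 0. \<exists>Cst > 0.
    \<forall>\<delta> \<in> {0<..\<delta>0}. \<forall>\<epsilon> \<in> {0<..\<epsilon>1}. \<forall>(z :: real \<Rightarrow> phase) (hb :: real \<Rightarrow> slow).
      (\<forall>t \<ge> 0. (z has_vector_derivative field kp m1 m2 \<epsilon> \<delta> (z t)) (at t within {0..}))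
      \<and> fst (snd (snd (z 0))) < fst (z 0)
      \<and> fst (z 0) < fst (snd (snd (snd (snd (z 0)))))
      \<and> slowvars k m1 m2 \<epsilon> \<delta> (z 0) \<in> Vs
      \<and> hb 0 = slowvars k m1 m2 \<epsilon> \<delta> (z 0)
      \<and> (\<forall>\<tau> \<in> {0..T}. (\<forall>s \<in> {0..\<tau>}. hb s \<in> Vs) \<longrightarrow>
           (\<forall>s \<in> {0..\<tau>}. (hb has_vector_derivative Hbar k m1 m2 \<delta> (hb s)) (at s within {0..\<tau>})))
      \<longrightarrow> (\<forall>T' TT. 0 \<le> T' \<and> T' \<le> TT
              \<and> TT \<le> cutoff Vs T hb (\<lambda>t. slowvars k m1 m2 \<epsilon> \<delta> (z t)) \<epsilon> / \<epsilon>
            \<longrightarrow> norm (integral {T'..TT} (\<lambda>s. Hfield kp \<epsilon> \<delta> (z s))) \<le> Cst * max 1 (TT - T'))"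
proof -
  have kp_le: "\<And>y. kp y \<le> 0" using kp_nonpos[OF k_deriv kp_deriv k_zero kp_neg] .
  have kp_ge1: "\<And>y. 1 \<le> y \<Longrightarrow> kp y = 0"
  proof -
    fix y :: real assume "1 \<le> y"
    then show "kp y = 0" using kp_gt1[OF k_deriv k_zero, of y] kp_1[OF k_deriv kp_deriv k_zero]
      by (cases "y = 1") auto
  qed
  have knn: "\<And>y. 0 \<le> k y" using k_nonneg[OF k_deriv k_zero kp_neg] .
  have kge: "\<And>y. y \<le> 0 \<Longrightarrow> k 0 \<le> k y" using k_ge0[OF k_deriv kp_neg] .
  have kpc: "continuous_on UNIV kp"
    using kp_deriv by (intro continuous_at_imp_continuous_on ballI DERIV_isCont) blast
  obtain a where a0: "0 < a" and a1: "a \<le> 1/2" and aA: "\<And>X. X \<in> A \<Longrightarrow> a \<le> X \<and> X \<le> 1 - a"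
  proof (cases "A = {}")
    case True
    show ?thesis by (rule that[of "1/2"]) (use True in auto)
  next
    case False
    obtain lo where lo: "lo \<in> A" "\<And>x. x \<in> A \<Longrightarrow> lo \<le> x"
      using compact_attains_inf[OF ABC(1) False] by blast
    obtain hi where hi: "hi \<in> A" "\<And>x. x \<in> A \<Longrightarrow> x \<le> hi"
      using compact_attains_sup[OF ABC(1) False] by blast
    have "0 < lo" "hi < 1" using lo(1) hi(1) ABC(2) by auto
    show ?thesis
    proof (rule that[of "min (1/2) (min lo (1 - hi))"])
      show "0 < min (1/2) (min lo (1 - hi))" using \<open>0 < lo\<close> \<open>hi < 1\<close> by simp
      show "min (1/2) (min lo (1 - hi)) \<le> 1/2" by (rule min.cobounded1)
      fix X assume "X \<in> A"
      then show "min (1/2) (min lo (1 - hi)) \<le> X \<and> X \<le> 1 - min (1/2) (min lo (1 - hi))"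
        using lo(2)[of X] hi(2)[of X] by auto
    qed
  qed
  obtain bm where bm0: "0 \<le> bm" and bB: "\<And>w. w \<in> B \<Longrightarrow> \<bar>w\<bar> \<le> bm"
  proof -
    obtain b where "\<forall>x\<in>B. \<bar>x\<bar> \<le> b" using compact_imp_bounded[OF ABC(3)] bounded_real by blast
    then show ?thesis using that[of "max 0 b"] by force
  qed
  define Cst where "Cst = bm + 2*(1+bm)*((2/a)*(2*k 0 + 2*(m1+m2+2*k 0))) + 1"
  have Cpos: "Cst > 0"
  proof -
    have "0 \<le> k 0" using knn by simp
    then have "0 \<le> 2*(1+bm)*((2/a)*(2*k 0 + 2*(m1+m2+2*k 0)))"
      using bm0 a0 masses by (intro mult_nonneg_nonneg add_nonneg_nonneg) auto
    then show ?thesis using bm0 by (simp add: Cst_def)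
  qed
  show ?thesis
    apply (rule exI[of _ "a/4"], rule conjI, simp add: a0)
    apply (rule exI[of _ "1::real"], rule conjI, simp)
    apply (rule exI[of _ Cst], rule conjI, rule Cpos)
    apply (intro ballI allI impI)
    subgoal for \<delta> \<epsilon> z hb T' TT
      unfolding Cst_def
      by (rule core[of kp k, OF kp_le kp_ge1 knn kge kpc masses T_pos a0 a1 aA bm0 bB ABC(5) V_sub]) auto
    done
qed

end
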